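(* For any $C<\infty$, $$\mathbf P\Big(I^{[-n,n]\times\{0\}}_1\nsubseteq[-n-\log n,\,n+\log n]\times[0,\log n]\Big)<\frac{1}{n^{C}}$$ for all sufficiently large $n$.
   Context: $\mathbb{H}=\{(x_1,x_2)\in\mathbb{Z}^2:x_2\ge0\}$. To each directed nearest-neighbour edge $x\to y$ in $\mathbb{H}$ attach an independent Poisson process $N^{x\to y}$ of intensity $\max(\sqrt{x_2},1)$. For $x\in\mathbb{H}$ and $t\ge0$, $I^x_t$ is the set of $y\in\mathbb{H}$ such that there are a nearest-neighbour path $x=y_0,y_1,\dots,y_m=y$ in $\mathbb{H}$ ($m\ge0$) and times $0<s_1<\dots<s_m\le t$ with $N^{y_{i-1}\to y_i}$ having an arrival at time $s_i$ for each $i$. For $V\subset\mathbb{H}$, $I^V_t=\bigcup_{x\in V}I^x_t$ (this is the interface process started from $V$, in which each occupied site $x$ tries to occupy each neighbour at rate $\max(\sqrt{x_2},1)$). *)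

theory Defs
  imports "HOL-Probability.Probability"
begin

type_synonym site = "int \<times> int"
type_synonym edge = "site \<times> site"

definition Hplane :: "site set" where
  "Hplane = {x. snd x \<ge> 0}"

definition nn :: "site \<Rightarrow> site \<Rightarrow> bool" where
  "nn x y \<longleftrightarrow> x \<in> Hplane \<and> y \<in> Hplane \<and> \<bar>fst x - fst y\<bar> + \<bar>snd x - snd y\<bar> = 1"

definition edges :: "edge set" where
  "edges = {(x, y). nn x y}"

definition rate :: "site \<Rightarrow> real" where
  "rate x = max (sqrt (real_of_int (snd x))) 1"

text \<open>Poisson processes realised through their i.i.d. exponential inter-arrival
  times: T e k is the (k+1)-st inter-arrival time of the process on edge e,
  and the arrival times are the partial sums.\<close>
definition arrivals :: "(edge \<Rightarrow> nat \<Rightarrow> 'a \<Rightarrow> real) \<Rightarrow> edge \<Rightarrow> 'a \<Rightarrow> real set" where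
  "arrivals T e \<omega> = range (\<lambda>k. \<Sum>j\<le>k. T e j \<omega>)"

definition poisson_edge_processes :: "'a measure \<Rightarrow> (edge \<Rightarrow> nat \<Rightarrow> 'a \<Rightarrow> real) \<Rightarrow> bool" where
  "poisson_edge_processes M T \<longleftrightarrow>
     prob_space M \<and>
     prob_space.indep_vars M (\<lambda>_. borel) (\<lambda>(e, k). T e k) (edges \<times> UNIV) \<and>
     (\<forall>e\<in>edges. \<forall>k. distributed M lborel (T e k)
         (\<lambda>s. ennreal (exponential_density (rate (fst e)) s)))"

definition infected :: "(edge \<Rightarrow> nat \<Rightarrow> 'a \<Rightarrow> real) \<Rightarrow> site set \<Rightarrow> real \<Rightarrow> 'a \<Rightarrow> site set" where
  "infected T V t \<omega> = {y. \<exists>x\<in>V. \<exists>ps ss.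
      length ps = Suc (length ss) \<and> hd ps = x \<and> last ps = y \<and>
      sorted_wrt (<) ss \<and>
      (\<forall>i<length ss. nn (ps ! i) (ps ! Suc i) \<and> 0 < ss ! i \<and> ss ! i \<le> t \<and>
          ss ! i \<in> arrivals T (ps ! i, ps ! Suc i) \<omega>)}"

end

theory Submission
  imports Defs
begin


lemma rate_ge1: "rate x \<ge> 1" by (simp add: rate_def)

lemma pep_prob: "poisson_edge_processes M T \<Longrightarrow> prob_space M"
  by (simp add: poisson_edge_processes_def)

lemma pep_indep: "poisson_edge_processes M T \<Longrightarrow>
   prob_space.indep_vars M (\<lambda>_. borel) (\<lambda>(e, k). T e k) (edges \<times> UNIV)"
  by (simp add: poisson_edge_processes_def)

lemma pep_meas:
  assumes "poisson_edge_processes M T" "e \<in> edges"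
  shows "T e k \<in> borel_measurable M"
proof -
  interpret prob_space M using pep_prob[OF assms(1)] .
  have "random_variable borel ((\<lambda>(e, k). T e k) (e,k))"
    using pep_indep[OF assms(1)] assms(2) unfolding indep_vars_def by blast
  then show ?thesis by simp
qed

lemma S_distr:
  assumes "poisson_edge_processes M T" "e \<in> edges"
  shows "distributed M lborel (\<lambda>\<omega>. \<Sum>j\<le>k. T e j \<omega>) (\<lambda>s. ennreal (erlang_density k (rate (fst e)) s))"
proof -
  interpret prob_space M using pep_prob[OF assms(1)] .
  have ind0: "indep_vars (\<lambda>_. borel) (\<lambda>(e, k). T e k) (edges \<times> UNIV)"
    using pep_indep[OF assms(1)] .
  have "indep_vars (\<lambda>_. borel) (\<lambda>(e, k). T e k) ((\<lambda>j. (e,j)) ` {..k})"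
    by (rule indep_vars_subset[OF ind0]) (use assms(2) in auto)
  have "indep_vars (\<lambda>j. PiM {(e,j)} (\<lambda>_. borel)) (\<lambda>j \<omega>. restrict (\<lambda>p. (\<lambda>(e, k). T e k) p \<omega>) {(e,j)}) {..k}"
    by (rule indep_vars_restrict[OF ind0]) (use assms(2) in \<open>auto simp: disjoint_family_on_def\<close>)
  then have "indep_vars (\<lambda>_. borel) (\<lambda>j \<omega>. (\<lambda>f. f (e,j)) (restrict (\<lambda>p. (\<lambda>(e, k). T e k) p \<omega>) {(e,j)})) {..k}"
    by (rule indep_vars_compose2) auto
  then have ind: "indep_vars (\<lambda>_. borel) (\<lambda>j. T e j) {..k}"
    by simp
  have "distributed M lborel (\<lambda>x. \<Sum>i\<in>{..k}. T e i x) (erlang_density (card {..k} - 1) (rate (fst e)))"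
    apply (rule exponential_distributed_sum)
    using assms ind rate_ge1[of "fst e"] by (auto simp: poisson_edge_processes_def)
  then show ?thesis by simp
qed



lemma erlang_sum:
  assumes "0 < l" "0 \<le> x"
  shows "(\<Sum>k. ennreal (erlang_density k l x)) = ennreal l"
proof -
  have eq: "\<And>k. erlang_density k l x = l * exp (- l * x) * ((l*x)^k /\<^sub>R fact k)"
    using assms by (simp add: erlang_density_def power_mult_distrib field_simps)
  have "(\<lambda>k. erlang_density k l x) sums (l * exp (- l * x) * exp (l*x))"
    unfolding eq by (intro sums_mult exp_converges)
  moreover have "l * exp (- l * x) * exp (l*x) = l"
    by (simp add: exp_minus field_simps)
  ultimately have s: "(\<lambda>k. erlang_density k l x) sums l" by metis
  have "(\<Sum>k. ennreal (erlang_density k l x)) = ennreal (\<Sum>k. erlang_density k l x)"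
    apply (rule suminf_ennreal2)
    using assms s by (auto simp: sums_iff)
  also have "\<dots> = ennreal l" using s by (simp add: sums_iff)
  finally show ?thesis .
qed

lemma count_bound:
  assumes pep: "poisson_edge_processes M T" and e: "e \<in> edges" and ab: "0 \<le> a" "a \<le> b"
  shows "emeasure M {\<omega> \<in> space M. \<exists>k. (\<Sum>j\<le>k. T e j \<omega>) \<in> {a<..b}} \<le> ennreal (rate (fst e) * (b - a))"
proof -
  interpret prob_space M using pep_prob[OF pep] .
  let ?r = "rate (fst e)"
  have r: "0 < ?r" using rate_ge1[of "fst e"] by simp
  have meas: "\<And>k. (\<lambda>\<omega>. \<Sum>j\<le>k. T e j \<omega>) \<in> borel_measurable M"
    using pep_meas[OF pep e] by measurable
  have "{\<omega> \<in> space M. \<exists>k. (\<Sum>j\<le>k. T e j \<omega>) \<in> {a<..b}} = (\<Union>k. (\<lambda>\<omega>. \<Sum>j\<le>k. T e j \<omega>) -` {a<..b} \<inter> space M)"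
    by auto
  also have "emeasure M \<dots> \<le> (\<Sum>k. emeasure M ((\<lambda>\<omega>. \<Sum>j\<le>k. T e j \<omega>) -` {a<..b} \<inter> space M))"
    apply (rule emeasure_subadditive_countably)
    using meas by auto
  also have "\<dots> = (\<Sum>k. \<integral>\<^sup>+x. ennreal (erlang_density k ?r x) * indicator {a<..b} x \<partial>lborel)"
    apply (rule suminf_cong)
    apply (rule distributed_emeasure[OF S_distr[OF pep e]])
    by simp
  also have "\<dots> = (\<integral>\<^sup>+x. (\<Sum>k. ennreal (erlang_density k ?r x) * indicator {a<..b} x) \<partial>lborel)"
    by (rule nn_integral_suminf[symmetric]) simp
  also have "\<dots> = (\<integral>\<^sup>+x. ennreal ?r * indicator {a<..b} x \<partial>lborel)"
  proof (rule nn_integral_cong)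
    fix x :: real
    show "(\<Sum>k. ennreal (erlang_density k ?r x) * indicator {a<..b} x) = ennreal ?r * indicator {a<..b} x"
    proof (cases "x \<in> {a<..b}")
      case True
      then have "0 \<le> x" using ab by auto
      then show ?thesis using True erlang_sum[OF r] by simp
    qed simp
  qed
  also have "\<dots> = ennreal ?r * ennreal (b - a)"
    using ab by (simp add: nn_integral_cmult_indicator)
  also have "\<dots> = ennreal (?r * (b - a))"
    using r ab by (simp add: ennreal_mult)
  finally show ?thesis .
qed



lemma path_prob:
  fixes L :: nat
  assumes pep: "poisson_edge_processes M T" and L: "0 < L"
    and inj: "inj_on E {..<L}" and Ee: "\<And>i. i < L \<Longrightarrow> E i \<in> edges"
    and ab: "\<And>i. i < L \<Longrightarrow> 0 \<le> a i \<and> a i \<le> b i"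
  shows "measure M {\<omega> \<in> space M. \<forall>i<L. \<exists>k. (\<Sum>j\<le>k. T (E i) j \<omega>) \<in> {a i<..b i}}
     \<le> (\<Prod>i<L. rate (fst (E i)) * (b i - a i))"
proof -
  interpret prob_space M using pep_prob[OF pep] .
  define K where "K i = {E i} \<times> (UNIV :: nat set)" for i
  define X where "X i \<omega> = restrict (\<lambda>p. (\<lambda>(e, k). T e k) p \<omega>) (K i)" for i \<omega>
  define A where "A i = {f \<in> space (PiM (K i) (\<lambda>_. borel :: real measure)). \<exists>k. (\<Sum>j\<le>k. f (E i, j)) \<in> {a i<..b i}}" for i
  have ind: "indep_vars (\<lambda>i. PiM (K i) (\<lambda>_. borel)) X {..<L}"
    unfolding X_def
    apply (rule indep_vars_restrict[OF pep_indep[OF pep]])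
    using Ee inj by (auto simp: K_def disjoint_family_on_def inj_on_def)
  have A: "A i \<in> sets (PiM (K i) (\<lambda>_. borel))" for i
  proof -
    have [measurable]: "(\<lambda>f. f (E i, j)) \<in> borel_measurable (PiM (K i) (\<lambda>_. borel :: real measure))" for j
      by (rule measurable_component_singleton) (simp add: K_def)
    show ?thesis unfolding A_def by measurable
  qed
  have pre: "X i -` A i \<inter> space M = {\<omega> \<in> space M. \<exists>k. (\<Sum>j\<le>k. T (E i) j \<omega>) \<in> {a i<..b i}}" for i
    by (auto simp: X_def A_def K_def space_PiM PiE_def extensional_def)
  have "{\<omega> \<in> space M. \<forall>i<L. \<exists>k. (\<Sum>j\<le>k. T (E i) j \<omega>) \<in> {a i<..b i}} = (\<Inter>i\<in>{..<L}. X i -` A i \<inter> space M)"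
    unfolding pre using L by auto
  also have "prob \<dots> = (\<Prod>i<L. prob (X i -` A i \<inter> space M))"
    by (rule indep_varsD[OF ind]) (use L A in \<open>auto simp: finite_lessThan\<close>)
  also have "\<dots> \<le> (\<Prod>i<L. rate (fst (E i)) * (b i - a i))"
  proof (rule prod_mono)
    fix i assume "i \<in> {..<L}"
    then have i: "i < L" by simp
    have "ennreal (prob (X i -` A i \<inter> space M)) = emeasure M (X i -` A i \<inter> space M)"
      by (simp add: emeasure_eq_measure)
    also have "\<dots> \<le> ennreal (rate (fst (E i)) * (b i - a i))"
      unfolding pre by (rule count_bound[OF pep Ee[OF i]]) (use ab[OF i] in auto)
    finally have "prob (X i -` A i \<inter> space M) \<le> rate (fst (E i)) * (b i - a i)"
      using ab[OF i] rate_ge1[of "fst (E i)"] by (smt (verit, best) ennreal_le_iff2 mult_nonneg_nonneg)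
    then show "0 \<le> prob (X i -` A i \<inter> space M) \<and> prob (X i -` A i \<inter> space M) \<le> rate (fst (E i)) * (b i - a i)"
      by simp
  qed
  finally show ?thesis .
qed



definition mv :: "site \<Rightarrow> nat \<Rightarrow> site" where
  "mv x d = (if d = 0 then (fst x + 1, snd x) else if d = 1 then (fst x - 1, snd x)
     else if d = 2 then (fst x, snd x + 1) else (fst x, snd x - 1))"

fun pathv :: "site \<Rightarrow> nat list \<Rightarrow> site list" where
  "pathv x [] = [x]"
| "pathv x (d # ds) = x # pathv (mv x d) ds"

lemma nn_mv: "nn x y \<Longrightarrow> \<exists>d<4. y = mv x d"
proof -
  assume "nn x y"
  then have h: "\<bar>fst x - fst y\<bar> + \<bar>snd x - snd y\<bar> = 1" by (simp add: nn_def)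
  obtain a b where x: "x = (a,b)" by force
  obtain c d where y: "y = (c,d)" by force
  have "(c = a+1 \<and> d = b) \<or> (c = a - 1 \<and> d = b) \<or> (c = a \<and> d = b+1) \<or> (c = a \<and> d = b - 1)"
    using h x y by auto
  then show ?thesis
  proof (elim disjE)
    assume "c = a+1 \<and> d = b" then show ?thesis by (intro exI[of _ 0]) (simp add: mv_def x y)
  next
    assume "c = a-1 \<and> d = b" then show ?thesis by (intro exI[of _ 1]) (simp add: mv_def x y)
  next
    assume "c = a \<and> d = b+1" then show ?thesis by (intro exI[of _ 2]) (simp add: mv_def x y)
  next
    assume "c = a \<and> d = b-1" then show ?thesis by (intro exI[of _ 3]) (simp add: mv_def x y)
  qed
qed

lemma path_repr:
  "length ps = Suc L \<Longrightarrow> (\<forall>i<L. nn (ps!i) (ps!Suc i)) \<Longrightarrow>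
   \<exists>ds. length ds = L \<and> set ds \<subseteq> {..<4} \<and> ps = pathv (hd ps) ds"
proof (induction L arbitrary: ps)
  case 0
  then show ?case by (cases ps) auto
next
  case (Suc L)
  then obtain x y rest where ps: "ps = x # y # rest"
    by (metis Suc_length_conv)
  have "nn x y" using Suc.prems(2)[rule_format, of 0] ps by simp
  then obtain d where d: "d < 4" "y = mv x d" using nn_mv by blast
  have "\<forall>i<L. nn ((y#rest)!i) ((y#rest)!Suc i)"
    using Suc.prems(2) ps by auto
  then obtain ds where "length ds = L" "set ds \<subseteq> {..<4}" "y # rest = pathv y ds"
    using Suc.IH[of "y#rest"] Suc.prems(1) ps by auto
  then show ?case using d ps by (intro exI[of _ "d # ds"]) auto
qed

definition Vn :: "nat \<Rightarrow> site set" where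
  "Vn n = {(a, 0) | a. - int n \<le> a \<and> a \<le> int n}"

definition Pth :: "nat \<Rightarrow> nat \<Rightarrow> site list set" where
  "Pth n L = {ps. length ps = Suc L \<and> hd ps \<in> Vn n \<and> (\<forall>i<L. nn (ps!i) (ps!Suc i)) \<and> distinct ps}"

lemma Pth_card: "finite (Pth n L) \<and> card (Pth n L) \<le> (2*n+1) * 4^L"
proof -
  let ?D = "{ds. set ds \<subseteq> {..<4::nat} \<and> length ds = L}"
  let ?f = "\<lambda>(a, ds). pathv (a, 0) ds"
  have sub: "Pth n L \<subseteq> ?f ` ({-int n..int n} \<times> ?D)"
  proof
    fix ps assume "ps \<in> Pth n L"
    then have ps: "length ps = Suc L" "hd ps \<in> Vn n" "\<forall>i<L. nn (ps!i) (ps!Suc i)"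
      by (auto simp: Pth_def)
    obtain ds where ds: "length ds = L" "set ds \<subseteq> {..<4}" "ps = pathv (hd ps) ds"
      using path_repr[OF ps(1) ps(3)] by blast
    obtain a where a: "hd ps = (a, 0)" "- int n \<le> a" "a \<le> int n" using ps(2) by (auto simp: Vn_def)
    show "ps \<in> ?f ` ({-int n..int n} \<times> ?D)"
      using ds a by (intro image_eqI[of _ _ "(a, ds)"]) auto
  qed
  have fin: "finite ({-int n..int n} \<times> ?D)"
    by (intro finite_cartesian_product finite_lists_length_eq) auto
  have "card (Pth n L) \<le> card (?f ` ({-int n..int n} \<times> ?D))"
    by (rule card_mono[OF finite_imageI[OF fin] sub])
  also have "\<dots> \<le> card ({-int n..int n} \<times> ?D)" by (rule card_image_le[OF fin])
  also have "\<dots> = (2*n+1) * 4^L"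
    by (simp add: card_cartesian_product card_lists_length_eq nat_add_distrib nat_mult_distrib algebra_simps)
  finally show ?thesis using finite_subset[OF sub finite_imageI[OF fin]] by simp
qed

definition Js :: "nat \<Rightarrow> nat list set" where
  "Js L = {js. length js = L \<and> sorted js \<and> set js \<subseteq> {..<L}}"

lemma Js_card: "finite (Js L) \<and> card (Js L) \<le> 4^L"
proof -
  let ?g = "\<lambda>js. (\<lambda>i. i + js!i) ` {..<L}"
  have key: "sorted_wrt (<) (map (\<lambda>i. i + js!i) [0..<L])" if "js \<in> Js L" for js
  proof -
    have "sorted js" "length js = L" using that by (auto simp: Js_def)
    then show ?thesis
      by (auto simp: sorted_wrt_iff_nth_less sorted_iff_nth_mono intro: add_less_le_mono)
  qed
  have inj: "inj_on ?g (Js L)"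
  proof (rule inj_onI)
    fix js js' assume a: "js \<in> Js L" "js' \<in> Js L" "?g js = ?g js'"
    have "set (map (\<lambda>i. i + js!i) [0..<L]) = set (map (\<lambda>i. i + js'!i) [0..<L])"
      using a(3) by (simp add: atLeast0LessThan)
    then have "map (\<lambda>i. i + js!i) [0..<L] = map (\<lambda>i. i + js'!i) [0..<L]"
      using strict_sorted_equal[OF key[OF a(2)] key[OF a(1)]] by simp
    then have "\<forall>i<L. js!i = js'!i" by (simp add: map_eq_conv)
    then show "js = js'" using a(1,2) by (intro nth_equalityI) (auto simp: Js_def)
  qed
  have img: "?g ` Js L \<subseteq> Pow {..<2*L}"
  proof
    fix S assume "S \<in> ?g ` Js L"
    then obtain js where js: "js \<in> Js L" "S = ?g js" by blast
    have "\<forall>i<L. js!i < L" using js(1) unfolding Js_def using nth_mem by fastforce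
    then show "S \<in> Pow {..<2*L}" using js(2) by auto
  qed
  have fin: "finite (Js L)"
  proof -
    have "Js L \<subseteq> {xs. set xs \<subseteq> {..<L} \<and> length xs = L}" by (auto simp: Js_def)
    then show ?thesis by (rule finite_subset) (simp add: finite_lists_length_eq)
  qed
  have "card (Js L) \<le> card (Pow {..<2*L})"
    by (rule card_inj_on_le[OF inj img]) simp
  also have "\<dots> = 4^L" by (simp add: card_Pow power_mult)
  finally show ?thesis using fin by simp
qed

lemma nn_step: "nn x y \<Longrightarrow> \<bar>fst y - fst x\<bar> \<le> 1 \<and> \<bar>snd y - snd x\<bar> \<le> 1 \<and> x \<in> Hplane \<and> y \<in> Hplane"
  by (auto simp: nn_def)

lemma path_disp:
  assumes "\<forall>i<m. nn (ps!i) (ps!Suc i)" "i \<le> m"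
  shows "\<bar>fst (ps!i) - fst (ps!0)\<bar> \<le> int i \<and> \<bar>snd (ps!i) - snd (ps!0)\<bar> \<le> int i"
  using assms(2)
proof (induction i)
  case 0 then show ?case by simp
next
  case (Suc i)
  then have "nn (ps!i) (ps!Suc i)" using assms(1) by auto
  with Suc show ?case using nn_step by fastforce
qed



definition Bev :: "'a measure \<Rightarrow> (edge \<Rightarrow> nat \<Rightarrow> 'a \<Rightarrow> real) \<Rightarrow> nat \<Rightarrow> site list \<Rightarrow> nat list \<Rightarrow> 'a set" where
  "Bev M T L ps js = {\<omega> \<in> space M. \<forall>i<L. \<exists>k. (\<Sum>j\<le>k. T (ps!i, ps!Suc i) j \<omega>)
      \<in> {real (js!i) / real L <.. (real (js!i) + 1) / real L}}"

lemma Bev_bound: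
  assumes pep: "poisson_edge_processes M T" and L: "0 < L" and ps: "ps \<in> Pth n L"
  shows "measure M (Bev M T L ps js) \<le> (1 / sqrt L) ^ L"
proof -
  have len: "length ps = Suc L" and nnp: "\<forall>i<L. nn (ps!i) (ps!Suc i)" and dist: "distinct ps"
    and hd: "hd ps \<in> Vn n" using ps by (auto simp: Pth_def)
  have h0: "snd (ps!0) = 0" using hd len by (cases ps) (auto simp: Vn_def)
  have "measure M (Bev M T L ps js) \<le> (\<Prod>i<L. rate (fst (ps!i, ps!Suc i)) *
      ((real (js!i) + 1) / real L - real (js!i) / real L))"
    unfolding Bev_def
  proof (rule path_prob[OF pep L])
    show "inj_on (\<lambda>i. (ps ! i, ps ! Suc i)) {..<L}"
      using dist len by (auto simp: inj_on_def nth_eq_iff_index_eq)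
    show "(ps ! i, ps ! Suc i) \<in> edges" if "i < L" for i
      using nnp that by (simp add: edges_def)
    show "0 \<le> real (js ! i) / real L \<and> real (js ! i) / real L \<le> (real (js ! i) + 1) / real L" for i
      using L by (simp add: divide_right_mono)
  qed
  also have "\<dots> \<le> (\<Prod>i<L. sqrt L * (1 / real L))"
  proof (rule prod_mono)
    fix i assume "i \<in> {..<L}"
    then have i: "i < L" by simp
    have "snd (ps!i) \<le> int i" using path_disp[OF nnp, of i] i h0 by auto
    then have "real_of_int (snd (ps!i)) \<le> real L" using i by linarith
    then have "sqrt (real_of_int (snd (ps!i))) \<le> sqrt L" by simp
    moreover have "1 \<le> sqrt L" using L by simp
    ultimately have "rate (ps!i) \<le> sqrt L" by (simp add: rate_def)
    moreover have "(real (js!i) + 1) / real L - real (js!i) / real L = 1 / real L"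
      by (metis add_diff_cancel_left' diff_divide_distrib)
    ultimately show "0 \<le> rate (fst (ps!i, ps!Suc i)) * ((real (js!i) + 1) / real L - real (js!i) / real L)
      \<and> rate (fst (ps!i, ps!Suc i)) * ((real (js!i) + 1) / real L - real (js!i) / real L) \<le> sqrt L * (1 / real L)"
      using rate_ge1[of "ps!i"] L by (simp add: divide_right_mono)
  qed
  also have "\<dots> = (1 / sqrt L) ^ L"
  proof -
    have "sqrt L * (1 / real L) = 1 / sqrt L"
    proof -
      have "real L = sqrt L * sqrt L" by simp
      moreover have "sqrt L > 0" using L by simp
      ultimately show ?thesis by (metis divide_divide_eq_right nonzero_mult_div_cancel_left order_less_irrefl times_divide_eq_right div_by_1)
    qed
    then show ?thesis by simp
  qed
  finally show ?thesis .
qed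



definition wit :: "(edge \<Rightarrow> nat \<Rightarrow> 'a \<Rightarrow> real) \<Rightarrow> 'a \<Rightarrow> site list \<Rightarrow> real list \<Rightarrow> bool" where
  "wit T \<omega> ps ss \<longleftrightarrow> length ps = Suc (length ss) \<and> sorted_wrt (<) ss \<and>
      (\<forall>i<length ss. nn (ps ! i) (ps ! Suc i) \<and> 0 < ss ! i \<and> ss ! i \<le> 1 \<and>
          ss ! i \<in> arrivals T (ps ! i, ps ! Suc i) \<omega>)"

lemma loop_step:
  assumes w: "wit T \<omega> ps ss" and ij: "i < j" "j < length ps" "ps!i = ps!j"
  shows "\<exists>ps' ss'. wit T \<omega> ps' ss' \<and> hd ps' = hd ps \<and> last ps' = last ps \<and> length ps' < length ps"
proof -
  define m where "m = length ss"
  have lp: "length ps = Suc m" using w by (simp add: wit_def m_def)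
  define m' where "m' = m - (j - i)"
  define f where "f l = (if l < i then l else l - i + j)" for l
  define ps' where "ps' = map (\<lambda>l. ps!(f l)) [0..<Suc m']"
  define ss' where "ss' = map (\<lambda>l. ss!(f l)) [0..<m']"
  have jm: "j \<le> m" using ij lp by simp
  have fmono: "f a < f b" if "a < b" for a b using that ij by (auto simp: f_def)
  have fb: "f l < m" if "l < m'" for l using that ij jm by (auto simp: f_def m'_def)
  have fm: "f m' = m" using ij jm by (auto simp: f_def m'_def)
  have fS: "ps!(f (Suc l)) = ps!(Suc (f l))" if "l < m'" for l
  proof (cases "Suc l < i")
    case True then show ?thesis by (simp add: f_def)
  next
    case False
    show ?thesis
    proof (cases "l < i")
      case True
      then have "Suc l = i" using False by simp
      then show ?thesis using ij by (simp add: f_def)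
    next
      case False
      then have "Suc l - i + j = Suc (l - i + j)" by simp
      then show ?thesis using False by (simp add: f_def)
    qed
  qed
  have len: "length ps' = Suc (length ss')" by (simp add: ps'_def ss'_def)
  have sorted: "sorted_wrt (<) ss'"
  proof -
    have "sorted_wrt (<) ss" using w by (simp add: wit_def)
    then show ?thesis
      unfolding ss'_def sorted_wrt_iff_nth_less using fmono fb m_def by auto
  qed
  have steps: "\<forall>l<length ss'. nn (ps' ! l) (ps' ! Suc l) \<and> 0 < ss' ! l \<and> ss' ! l \<le> 1 \<and>
          ss' ! l \<in> arrivals T (ps' ! l, ps' ! Suc l) \<omega>"
  proof (intro allI impI)
    fix l assume l: "l < length ss'"
    then have l': "l < m'" by (simp add: ss'_def)
    have e1: "ps'!l = ps!(f l)" "ps'!Suc l = ps!(Suc (f l))" "ss'!l = ss!(f l)"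
      using l' fS[OF l'] by (auto simp: ps'_def ss'_def nth_append simp del: upt_Suc)
    show "nn (ps' ! l) (ps' ! Suc l) \<and> 0 < ss' ! l \<and> ss' ! l \<le> 1 \<and>
          ss' ! l \<in> arrivals T (ps' ! l, ps' ! Suc l) \<omega>"
      unfolding e1 using w fb[OF l'] by (simp add: wit_def m_def)
  qed
  have "hd ps' = hd ps"
  proof -
    have "hd ps' = ps!(f 0)" by (simp add: ps'_def hd_map del: upt_Suc)
    also have "\<dots> = ps!0" using ij by (auto simp: f_def)
    also have "\<dots> = hd ps" using lp by (metis hd_conv_nth list.size(3) nat.distinct(1))
    finally show ?thesis .
  qed
  moreover have "last ps' = last ps"
  proof -
    have "last ps' = ps!(f m')" by (simp add: ps'_def last_map del: upt_Suc)
    also have "\<dots> = last ps" using fm lp by (metis diff_Suc_1 last_conv_nth list.size(3) nat.distinct(1))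
    finally show ?thesis .
  qed
  moreover have "length ps' < length ps" using ij jm lp by (simp add: ps'_def m'_def)
  ultimately show ?thesis using len sorted steps
    by (intro exI[of _ ps'] exI[of _ ss']) (simp add: wit_def)
qed

lemma loop_erase:
  "wit T \<omega> ps ss \<Longrightarrow> \<exists>ps' ss'. wit T \<omega> ps' ss' \<and> hd ps' = hd ps \<and> last ps' = last ps \<and> distinct ps'"
proof (induction "length ps" arbitrary: ps ss rule: less_induct)
  case less
  show ?case
  proof (cases "distinct ps")
    case True then show ?thesis using less.prems by blast
  next
    case False
    then obtain i j where ij: "i < j" "j < length ps" "ps!i = ps!j"
      by (metis distinct_conv_nth linorder_neqE_nat)
    obtain ps' ss' where "wit T \<omega> ps' ss'" "hd ps' = hd ps" "last ps' = last ps" "length ps' < length ps"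
      using loop_step[OF less.prems ij] by blast
    then show ?thesis using less.hyps by metis
  qed
qed



lemma ceil_lemma:
  fixes s :: real and L :: nat
  assumes "0 < s" "s \<le> 1" "0 < L"
  shows "real (nat \<lceil>s * L\<rceil> - 1) / L < s \<and> s \<le> (real (nat \<lceil>s * L\<rceil> - 1) + 1) / L \<and> nat \<lceil>s * L\<rceil> - 1 < L"
proof -
  have pos: "0 < s * L" using assms by simp
  have c1: "1 \<le> \<lceil>s * L\<rceil>" using pos by (simp add: order.strict_implies_order zero_less_ceiling)
  have le: "s * L \<le> L" using assms by simp
  have c2: "\<lceil>s * L\<rceil> \<le> int L" using le by (simp add: ceiling_le_iff)
  have eq: "real (nat \<lceil>s * L\<rceil> - 1) = of_int \<lceil>s * L\<rceil> - 1" proof -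
    have "nat \<lceil>s * L\<rceil> \<ge> 1" using c1 by linarith
    then have "real (nat \<lceil>s * L\<rceil> - 1) = real (nat \<lceil>s * L\<rceil>) - 1" by (simp add: of_nat_diff)
    also have "\<dots> = of_int \<lceil>s * L\<rceil> - 1" using c1 by simp
    finally show ?thesis .
  qed
  have a: "of_int \<lceil>s * L\<rceil> - 1 < s * L" by (simp add: ceiling_correct ceiling_less_iff) 
  have b: "s * L \<le> of_int \<lceil>s * L\<rceil>" by simp
  have L: "real L > 0" using assms by simp
  show ?thesis unfolding eq using a b c1 c2 L
    by (auto simp: pos_divide_less_eq pos_le_divide_eq)
qed

lemma hd_nth0: "ps \<noteq> [] \<Longrightarrow> hd ps = ps!0" by (simp add: hd_conv_nth)

lemma escape:
  assumes om: "\<omega> \<in> space M" and y: "y \<in> infected T (Vn n) 1 \<omega>"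
    and ny: "y \<notin> {(a, b). - real n - ln (real n) \<le> real_of_int a \<and> real_of_int a \<le> real n + ln (real n)
                    \<and> 0 \<le> real_of_int b \<and> real_of_int b \<le> ln (real n)}"
    and L: "L = nat \<lfloor>ln (real n)\<rfloor>" "0 < L"
  shows "\<exists>ps \<in> Pth n L. \<exists>js \<in> Js L. \<omega> \<in> Bev M T L ps js"
proof -
  obtain x ps ss where x: "x \<in> Vn n" and w0: "wit T \<omega> ps ss" and hx: "hd ps = x" and ly: "last ps = y"
    using y unfolding infected_def wit_def by blast
  obtain ps' ss' where w: "wit T \<omega> ps' ss'" and hx': "hd ps' = x" and ly': "last ps' = y" and dist: "distinct ps'"
    using loop_erase[OF w0] hx ly by blast
  define m where "m = length ss'"
  have lp: "length ps' = Suc m" using w by (simp add: wit_def m_def)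
  have steps: "\<forall>i<m. nn (ps' ! i) (ps' ! Suc i) \<and> 0 < ss' ! i \<and> ss' ! i \<le> 1 \<and>
          ss' ! i \<in> arrivals T (ps' ! i, ps' ! Suc i) \<omega>" using w by (simp add: wit_def m_def)
  have p0: "ps'!0 = x" using hx' lp hd_nth0[of ps'] by (metis list.size(3) nat.distinct(1))
  have pm: "ps'!m = y" using ly' lp by (metis diff_Suc_1 last_conv_nth list.size(3) nat.distinct(1))
  obtain a where xa: "x = (a, 0)" "- int n \<le> a" "a \<le> int n" using x by (auto simp: Vn_def)
  have lnL: "real L \<le> ln (real n)"
  proof -
    have "0 < \<lfloor>ln (real n)\<rfloor>" using L by simp
    then show ?thesis using L(1) by simp
  qed
  have Lm: "L \<le> m"
  proof (rule ccontr)
    assume "\<not> L \<le> m"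
    then have mL: "real m \<le> ln (real n)" using lnL by simp
    have d: "\<bar>fst y - a\<bar> \<le> int m" "\<bar>snd y\<bar> \<le> int m"
      using path_disp[of m ps' m] steps p0 pm xa by auto
    have "snd y \<ge> 0"
    proof (cases m)
      case 0 then show ?thesis using pm p0 xa by force
    next
      case (Suc m0)
      then have "nn (ps'!m0) (ps'!m)" using steps by auto
      then show ?thesis using pm by (simp add: nn_def Hplane_def)
    qed
    then have "y \<in> {(a, b). - real n - ln (real n) \<le> real_of_int a \<and> real_of_int a \<le> real n + ln (real n)
                    \<and> 0 \<le> real_of_int b \<and> real_of_int b \<le> ln (real n)}"
    proof -
      obtain c e where ye: "y = (c, e)" by force
      have i1: "\<bar>c - a\<bar> \<le> int m" "\<bar>e\<bar> \<le> int m" "0 \<le> e" using d \<open>snd y \<ge> 0\<close> ye by auto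
      have r1: "\<bar>real_of_int c - real_of_int a\<bar> \<le> real m" "real_of_int e \<le> real m" "0 \<le> real_of_int e"
      proof -
        have "real_of_int \<bar>c - a\<bar> \<le> real_of_int (int m)" using i1(1) by (simp only: of_int_le_iff)
        then show "\<bar>real_of_int c - real_of_int a\<bar> \<le> real m" by simp
        have "real_of_int e \<le> real_of_int (int m)" using i1 by (simp only: of_int_le_iff)
        then show "real_of_int e \<le> real m" by simp
        show "0 \<le> real_of_int e" using i1 by simp
      qed
      have r2: "- real n \<le> real_of_int a" "real_of_int a \<le> real n" using xa by simp_all
      show ?thesis using r1 r2 mL ye by (simp add: abs_le_iff)
    qed
    then show False using ny by blast
  qed
  define ps0 where "ps0 = take (Suc L) ps'"
  define js where "js = map (\<lambda>i. nat \<lceil>ss'!i * real L\<rceil> - 1) [0..<L]"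
  have ps0: "ps0 \<in> Pth n L"
  proof -
    have "length ps0 = Suc L" using lp Lm by (simp add: ps0_def)
    moreover have "hd ps0 \<in> Vn n" using hx' x lp by (simp add: ps0_def)
    moreover have "\<forall>i<L. nn (ps0!i) (ps0!Suc i)" using steps Lm by (auto simp: ps0_def)
    moreover have "distinct ps0" using dist by (simp add: ps0_def)
    ultimately show ?thesis by (simp add: Pth_def)
  qed
  have js: "js \<in> Js L"
  proof -
    have srt: "sorted_wrt (<) ss'" using w by (simp add: wit_def)
    have "sorted js"
      unfolding sorted_iff_nth_mono
    proof (intro allI impI)
      fix i j assume ij: "i \<le> j" "j < length js"
      then have "ss'!i \<le> ss'!j" using srt Lm m_def
        by (cases "i = j") (auto simp: js_def sorted_wrt_iff_nth_less intro: less_imp_le)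
      then have "\<lceil>ss'!i * real L\<rceil> \<le> \<lceil>ss'!j * real L\<rceil>"
        by (intro ceiling_mono mult_right_mono) auto
      then show "js!i \<le> js!j" using ij by (simp add: js_def)
    qed
    moreover have "set js \<subseteq> {..<L}"
      using steps Lm L(2) ceil_lemma by (auto simp: js_def)
    ultimately show ?thesis by (simp add: Js_def js_def)
  qed
  have "\<omega> \<in> Bev M T L ps0 js"
    unfolding Bev_def
  proof (intro CollectI conjI allI impI om)
    fix i assume i: "i < L"
    then have im: "i < m" using Lm by simp
    obtain k where k: "ss'!i = (\<Sum>j\<le>k. T (ps'!i, ps'!Suc i) j \<omega>)"
      using steps im by (auto simp: arrivals_def)
    have e: "ps0!i = ps'!i" "ps0!Suc i = ps'!Suc i" "js!i = nat \<lceil>ss'!i * real L\<rceil> - 1"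
      using i by (auto simp: ps0_def js_def)
    show "\<exists>k. (\<Sum>j\<le>k. T (ps0 ! i, ps0 ! Suc i) j \<omega>) \<in> {real (js ! i) / real L<..(real (js ! i) + 1) / real L}"
      using ceil_lemma[of "ss'!i" L] steps im L(2) unfolding e by (intro exI[of _ k]) (auto simp: k[symmetric])
  qed
  then show ?thesis using ps0 js by blast
qed



definition Sx :: "(edge \<Rightarrow> nat \<Rightarrow> 'a \<Rightarrow> real) \<Rightarrow> site list \<Rightarrow> nat list \<Rightarrow> nat \<Rightarrow> 'a \<Rightarrow> real" where
  "Sx T ps ks i \<omega> = (\<Sum>j\<le>ks!i. T (ps!i, ps!Suc i) j \<omega>)"

definition Qp :: "(edge \<Rightarrow> nat \<Rightarrow> 'a \<Rightarrow> real) \<Rightarrow> site set \<Rightarrow> site set \<Rightarrow> site \<times> site list \<Rightarrow> nat list \<Rightarrow> 'a \<Rightarrow> bool" where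
  "Qp T V B xp ks \<omega> \<longleftrightarrow> (fst xp \<in> V \<and> length (snd xp) = Suc (length ks) \<and> hd (snd xp) = fst xp \<and> last (snd xp) \<notin> B
     \<and> (\<forall>i\<in>{..<length ks}. nn (snd xp!i) (snd xp!Suc i))) \<and>
     ((\<forall>i\<in>{..<length ks}. 0 < Sx T (snd xp) ks i \<omega> \<and> Sx T (snd xp) ks i \<omega> \<le> 1) \<and>
      (\<forall>i\<in>{..<length ks}. \<forall>j\<in>{..<length ks}. i < j \<longrightarrow> Sx T (snd xp) ks i \<omega> < Sx T (snd xp) ks j \<omega>))"

lemma bad_eq:
  "{\<omega> \<in> space M. \<not> infected T V 1 \<omega> \<subseteq> B} = {\<omega> \<in> space M. \<exists>xp ks. Qp T V B xp ks \<omega>}"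
proof (intro Collect_cong conj_cong refl iffI)
  fix \<omega> assume "\<not> infected T V 1 \<omega> \<subseteq> B"
  then obtain y where "y \<in> infected T V 1 \<omega>" "y \<notin> B" by blast
  then obtain x ps ss where x: "x \<in> V" "length ps = Suc (length ss)" "hd ps = x" "last ps = y"
     "sorted_wrt (<) ss" and st: "\<forall>i<length ss. nn (ps ! i) (ps ! Suc i) \<and> 0 < ss ! i \<and> ss ! i \<le> 1 \<and>
          ss ! i \<in> arrivals T (ps ! i, ps ! Suc i) \<omega>"
    unfolding infected_def by blast
  have "\<forall>i<length ss. \<exists>k. ss!i = (\<Sum>j\<le>k. T (ps!i, ps!Suc i) j \<omega>)"
    using st by (auto simp: arrivals_def)
  then obtain kf where kf: "\<forall>i<length ss. ss!i = (\<Sum>j\<le>kf i. T (ps!i, ps!Suc i) j \<omega>)" by metis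
  define ks where "ks = map kf [0..<length ss]"
  have Sxe: "Sx T ps ks i \<omega> = ss!i" if "i < length ss" for i
    using that kf by (simp add: Sx_def ks_def)
  have "Qp T V B (x, ps) ks \<omega>"
    unfolding Qp_def using x st Sxe \<open>y \<notin> B\<close>
    by (auto simp: ks_def sorted_wrt_iff_nth_less)
  then show "\<exists>xp ks. Qp T V B xp ks \<omega>" by blast
next
  fix \<omega> assume "\<exists>xp ks. Qp T V B xp ks \<omega>"
  then obtain x ps ks where q: "Qp T V B (x, ps) ks \<omega>" by auto
  define ss where "ss = map (\<lambda>i. Sx T ps ks i \<omega>) [0..<length ks]"
  have "last ps \<in> infected T V 1 \<omega>"
    unfolding infected_def
  proof (intro CollectI bexI exI conjI)
    show "x \<in> V" using q by (simp add: Qp_def)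
    show "length ps = Suc (length ss)" "hd ps = x" using q by (auto simp: Qp_def ss_def)
    show "sorted_wrt (<) ss" using q by (auto simp: Qp_def ss_def sorted_wrt_iff_nth_less)
    show "\<forall>i<length ss. nn (ps ! i) (ps ! Suc i) \<and> 0 < ss ! i \<and> ss ! i \<le> 1 \<and>
          ss ! i \<in> arrivals T (ps ! i, ps ! Suc i) \<omega>"
      using q by (auto simp: Qp_def ss_def arrivals_def Sx_def)
  qed simp
  then show "\<not> infected T V 1 \<omega> \<subseteq> B" using q by (auto simp: Qp_def)
qed



lemma t1:
  assumes pep: "poisson_edge_processes M T" and e: "(snd xp!i, snd xp!Suc i) \<in> edges"
  shows "(\<lambda>\<omega>. Sx T (snd xp) ks i \<omega>) \<in> borel_measurable M"
  unfolding Sx_def apply (rule borel_measurable_sum) using pep_meas[OF pep e] by blast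

lemma my_ball: "finite I \<Longrightarrow> (\<And>i. i\<in> I \<Longrightarrow> Measurable.pred M (\<lambda>x. P x i)) \<Longrightarrow> Measurable.pred M (\<lambda>x. \<forall>i\<in>I. P x i)"
  unfolding pred_def by (rule sets.sets_Collect_finite_All) auto

lemma t2: assumes [measurable]: "f \<in> borel_measurable M" shows "Measurable.pred M (\<lambda>\<omega>. 0 < f \<omega> \<and> f \<omega> \<le> (1::real))"
  by measurable

lemma t3: assumes [measurable]: "f \<in> borel_measurable M" "g \<in> borel_measurable M" shows "Measurable.pred M (\<lambda>\<omega>. P \<longrightarrow> f \<omega> < (g \<omega> :: real))"
  by measurable

lemma pc1: "D \<Longrightarrow> Measurable.pred M A \<Longrightarrow> Measurable.pred M C \<Longrightarrow> Measurable.pred M (\<lambda>x. D \<and> (A x \<and> C x))"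
  by simp

lemma pc2: "\<not> D \<Longrightarrow> Measurable.pred M (\<lambda>x. D \<and> Z x)"
  by simp

lemma bad_meas:
  assumes pep: "poisson_edge_processes M T"
  shows "{\<omega> \<in> space M. \<not> infected T V 1 \<omega> \<subseteq> B} \<in> sets M"
proof -
  have "Measurable.pred M (\<lambda>\<omega>. Qp T V B xp ks \<omega>)" for xp ks
  proof (cases "fst xp \<in> V \<and> length (snd xp) = Suc (length ks) \<and> hd (snd xp) = fst xp \<and> last (snd xp) \<notin> B
     \<and> (\<forall>i\<in>{..<length ks}. nn (snd xp!i) (snd xp!Suc i))")
    case True
    have mS: "(\<lambda>\<omega>. Sx T (snd xp) ks i \<omega>) \<in> borel_measurable M" if "i \<in> {..<length ks}" for i
    proof (rule t1[OF pep])
      have "nn (snd xp!i) (snd xp!Suc i)" using True that by blast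
      then show "(snd xp!i, snd xp!Suc i) \<in> edges" by (simp add: edges_def)
    qed
    have p1: "Measurable.pred M (\<lambda>\<omega>. \<forall>i\<in>{..<length ks}. 0 < Sx T (snd xp) ks i \<omega> \<and> Sx T (snd xp) ks i \<omega> \<le> 1)"
      apply (rule my_ball) apply simp apply (rule t2) apply (rule mS) by assumption
    have p2: "Measurable.pred M (\<lambda>\<omega>. \<forall>i\<in>{..<length ks}. \<forall>j\<in>{..<length ks}. i < j \<longrightarrow> Sx T (snd xp) ks i \<omega> < Sx T (snd xp) ks j \<omega>)"
      apply (rule my_ball) apply simp apply (rule my_ball) apply simp apply (rule t3) apply (rule mS) apply assumption apply (rule mS) by assumption
    show ?thesis unfolding Qp_def by (rule pc1[OF True p1 p2])
  next
    case False
    then show ?thesis unfolding Qp_def by (rule pc2)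
  qed
  then have "Measurable.pred M (\<lambda>\<omega>. \<exists>ks. Qp T V B xp ks \<omega>)" for xp
    by (rule pred_intros_countable(2))
  then have "Measurable.pred M (\<lambda>\<omega>. \<exists>xp ks. Qp T V B xp ks \<omega>)"
    by (rule pred_intros_countable(2))
  then show ?thesis unfolding bad_eq pred_def .
qed



lemma asym:
  fixes C :: real
  shows "\<forall>\<^sub>F n in sequentially. 1 \<le> ln (real n) \<and> (2 * real n + 1) * 4 ^ nat \<lfloor>ln (real n)\<rfloor> * 4 ^ nat \<lfloor>ln (real n)\<rfloor>
      * (1 / sqrt (nat \<lfloor>ln (real n)\<rfloor>)) ^ nat \<lfloor>ln (real n)\<rfloor> < 1 / real n powr C"
proof -
  define c where "c = max C 0"
  define K where "K = (16 * exp (c + 2))^2"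
  define N where "N = nat \<lceil>exp (K + 1) + 3 * exp (c + 2) + 3\<rceil>"
  show ?thesis unfolding eventually_sequentially
  proof (intro exI[of _ N] allI impI)
    fix n assume nN: "N \<le> n"
    have nN': "exp (K + 1) + 3 * exp (c + 2) + 3 \<le> real n"
      using nN unfolding N_def by linarith
    have "(3::real) \<le> real n" using nN' exp_gt_zero[of "K+1"] exp_gt_zero[of "c+2"] by linarith
    then have n3: "3 \<le> n" by simp
    have npos: "0 < real n" using n3 by simp
    define L where "L = nat \<lfloor>ln (real n)\<rfloor>"
    have lnK: "K + 1 \<le> ln (real n)"
    proof -
      have "exp (K+1) \<le> real n" using nN' exp_gt_zero[of "c+2"] by linarith
      then show ?thesis using npos ln_le_cancel_iff[of "exp (K+1)" "real n"] by simp
    qed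
    have K0: "0 \<le> K" by (simp add: K_def)
    have LK: "K \<le> real L" and Lln: "ln (real n) - 1 \<le> real L"
      unfolding L_def using lnK K0 by linarith+
    have c0: "0 \<le> c" by (simp add: c_def)
    have sqL: "16 * exp (c + 2) \<le> sqrt (real L)"
    proof -
      have "sqrt K = 16 * exp (c + 2)" unfolding K_def by (simp only: real_sqrt_abs) (simp add: abs_of_pos)
      then show ?thesis using LK real_sqrt_le_mono by metis
    qed
    have Lpos: "0 < sqrt (real L)" using sqL exp_gt_zero[of "c+2"] by linarith
    have q: "16 / sqrt (real L) \<le> exp (- (c + 2))"
    proof -
      have le: "exp (- (c + 2)) * (16 * exp (c + 2)) \<le> exp (- (c + 2)) * sqrt (real L)"
        using sqL by (rule mult_left_mono) simp
      have e: "exp (- (c + 2)) * (16 * exp (c + 2)) = 16"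
        by (simp add: exp_add[symmetric])
      have "16 \<le> exp (- (c + 2)) * sqrt (real L)" using le unfolding e .
      then show ?thesis using Lpos by (simp add: divide_le_eq)
    qed
    have "(2 * real n + 1) * 4 ^ L * 4 ^ L * (1 / sqrt L) ^ L = (2 * real n + 1) * (16 / sqrt L) ^ L"
      by (simp add: power_mult_distrib[symmetric] power_divide)
    also have "\<dots> \<le> (2 * real n + 1) * exp (- (c + 2)) ^ L"
      using q Lpos by (intro mult_left_mono power_mono) auto
    also have "exp (- (c + 2)) ^ L = exp (- (c + 2) * real L)"
      by (simp add: exp_of_nat_mult[symmetric] mult.commute)
    also have "\<dots> \<le> exp (- (c + 2) * (ln (real n) - 1))"
      using Lln c0 by (intro exp_mono) (simp add: mult_left_mono)
    also have "\<dots> = exp (c + 2) * real n powr (- (c + 2))"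
      using npos by (simp add: powr_def algebra_simps exp_add[symmetric])
    finally have b1: "(2 * real n + 1) * 4 ^ L * 4 ^ L * (1 / sqrt L) ^ L \<le> (2 * real n + 1) * (exp (c + 2) * real n powr (- (c + 2)))"
      by (simp add: mult_left_mono)
    also have "\<dots> \<le> (3 * real n) * (exp (c + 2) * real n powr (- (c + 2)))"
      using n3 by (intro mult_right_mono) auto
    also have "\<dots> = (3 * exp (c + 2)) * (real n * real n powr (- (c + 2)))" by simp
    also have "real n * real n powr (- (c + 2)) = real n powr (- c) / real n"
      using npos by (simp add: powr_add[symmetric] powr_diff powr_minus field_simps power2_eq_square)
    also have "3 * exp (c + 2) * (real n powr (- c) / real n) < real n powr (- c)"
    proof -
      have "3 * exp (c + 2) < real n" using nN' exp_gt_zero[of "K+1"] by linarith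
      then have "3 * exp (c + 2) / real n < 1" using npos by simp
      moreover have "0 < real n powr (- c)" using npos by simp
      ultimately have "(3 * exp (c + 2) / real n) * real n powr (- c) < 1 * real n powr (- c)"
        by (intro mult_strict_right_mono) auto
      then show ?thesis by simp
    qed
    also have "real n powr (- c) \<le> 1 / real n powr C"
    proof -
      have "real n powr C \<le> real n powr c" using n3 by (intro powr_mono) (auto simp: c_def)
      then have "1 / real n powr c \<le> 1 / real n powr C" using npos by (intro divide_left_mono) auto
      then show ?thesis using npos by (simp add: powr_minus divide_inverse)
    qed
    finally show "1 \<le> ln (real n) \<and> (2 * real n + 1) * 4 ^ nat \<lfloor>ln (real n)\<rfloor> * 4 ^ nat \<lfloor>ln (real n)\<rfloor>
      * (1 / sqrt (nat \<lfloor>ln (real n)\<rfloor>)) ^ nat \<lfloor>ln (real n)\<rfloor> < 1 / real n powr C"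
      using n3 lnK K0 unfolding L_def by simp
  qed
qed



lemma Bev_meas:
  assumes pep: "poisson_edge_processes M T" and ps: "ps \<in> Pth n L"
  shows "Bev M T L ps js \<in> sets M"
proof -
  have eq: "Bev M T L ps js = {\<omega> \<in> space M. \<forall>i\<in>{..<L}. \<exists>k. (\<Sum>j\<le>k. T (ps!i, ps!Suc i) j \<omega>)
      \<in> {real (js!i) / real L <.. (real (js!i) + 1) / real L}}"
    by (auto simp: Bev_def)
  have "Measurable.pred M (\<lambda>\<omega>. \<forall>i\<in>{..<L}. \<exists>k. (\<Sum>j\<le>k. T (ps!i, ps!Suc i) j \<omega>)
      \<in> {real (js!i) / real L <.. (real (js!i) + 1) / real L})"
  proof (rule my_ball)
    fix i assume i: "i \<in> {..<L}"
    have e: "(ps!i, ps!Suc i) \<in> edges" using ps i by (simp add: Pth_def edges_def)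
    have "Measurable.pred M (\<lambda>\<omega>. (\<Sum>j\<le>k. T (ps!i, ps!Suc i) j \<omega>)
      \<in> {real (js!i) / real L <.. (real (js!i) + 1) / real L})" for k
      apply (rule pred_sets2[where N=borel])
       apply simp
      apply (rule borel_measurable_sum)
      using pep_meas[OF pep e] by blast
    then show "Measurable.pred M (\<lambda>\<omega>. \<exists>k. (\<Sum>j\<le>k. T (ps!i, ps!Suc i) j \<omega>)
      \<in> {real (js!i) / real L <.. (real (js!i) + 1) / real L})"
      by (rule pred_intros_countable(2))
  qed simp
  then show ?thesis unfolding eq pred_def .
qed

theorem mainTheorem4:
  fixes M :: "'a measure" and T :: "edge \<Rightarrow> nat \<Rightarrow> 'a \<Rightarrow> real" and C :: real
  assumes "poisson_edge_processes M T"
  shows "\<forall>\<^sub>F n in sequentially.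
    {\<omega> \<in> space M. \<not> infected T {(a, 0) | a. - int n \<le> a \<and> a \<le> int n} 1 \<omega>
        \<subseteq> {(a, b). - real n - ln (real n) \<le> real_of_int a \<and> real_of_int a \<le> real n + ln (real n)
                    \<and> 0 \<le> real_of_int b \<and> real_of_int b \<le> ln (real n)}} \<in> sets M
    \<and> measure M {\<omega> \<in> space M. \<not> infected T {(a, 0) | a. - int n \<le> a \<and> a \<le> int n} 1 \<omega>
        \<subseteq> {(a, b). - real n - ln (real n) \<le> real_of_int a \<and> real_of_int a \<le> real n + ln (real n)
                    \<and> 0 \<le> real_of_int b \<and> real_of_int b \<le> ln (real n)}}
      < 1 / real n powr C"
proof -
  note pep = assms
  interpret prob_space M using pep_prob[OF pep] .
  show ?thesis
  proof (rule eventually_mono[OF asym[of C]], elim conjE)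
    fix n :: nat
    define L where "L = nat \<lfloor>ln (real n)\<rfloor>"
    define box where "box = {(a, b). - real n - ln (real n) \<le> real_of_int a \<and> real_of_int a \<le> real n + ln (real n)
                    \<and> 0 \<le> real_of_int b \<and> real_of_int b \<le> ln (real n)}"
    define bad where "bad = {\<omega> \<in> space M. \<not> infected T (Vn n) 1 \<omega> \<subseteq> box}"
    assume ln1: "1 \<le> ln (real n)"
      and bnd: "(2 * real n + 1) * 4 ^ nat \<lfloor>ln (real n)\<rfloor> * 4 ^ nat \<lfloor>ln (real n)\<rfloor>
      * (1 / sqrt (nat \<lfloor>ln (real n)\<rfloor>)) ^ nat \<lfloor>ln (real n)\<rfloor> < 1 / real n powr C"
    have L0: "0 < L" using ln1 unfolding L_def by linarith
    have badm: "bad \<in> sets M" unfolding bad_def by (rule bad_meas[OF pep])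
    have PJ: "finite (Pth n L)" "card (Pth n L) \<le> (2*n+1) * 4^L" "finite (Js L)" "card (Js L) \<le> 4^L"
      using Pth_card[of n L] Js_card[of L] by auto
    have sub: "bad \<subseteq> (\<Union>ps\<in>Pth n L. \<Union>js\<in>Js L. Bev M T L ps js)"
    proof
      fix \<omega> assume "\<omega> \<in> bad"
      then obtain y where "\<omega> \<in> space M" "y \<in> infected T (Vn n) 1 \<omega>" "y \<notin> box"
        unfolding bad_def by blast
      then show "\<omega> \<in> (\<Union>ps\<in>Pth n L. \<Union>js\<in>Js L. Bev M T L ps js)"
        using escape[of \<omega> M y T n L] L0 unfolding box_def L_def by blast
    qed
    have Um: "(\<Union>ps\<in>Pth n L. \<Union>js\<in>Js L. Bev M T L ps js) \<in> sets M"
      using PJ Bev_meas[OF pep] by (intro sets.finite_UN) auto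
    have "measure M bad \<le> measure M (\<Union>ps\<in>Pth n L. \<Union>js\<in>Js L. Bev M T L ps js)"
      by (rule finite_measure_mono[OF sub Um])
    also have "\<dots> \<le> (\<Sum>ps\<in>Pth n L. measure M (\<Union>js\<in>Js L. Bev M T L ps js))"
      using PJ Bev_meas[OF pep] by (intro measure_UNION_le) auto
    also have "\<dots> \<le> (\<Sum>ps\<in>Pth n L. \<Sum>js\<in>Js L. measure M (Bev M T L ps js))"
      using PJ Bev_meas[OF pep] by (intro sum_mono measure_UNION_le) auto
    also have "\<dots> \<le> (\<Sum>ps\<in>Pth n L. \<Sum>js\<in>Js L. (1 / sqrt L) ^ L)"
      using Bev_bound[OF pep L0] by (intro sum_mono) auto
    also have "\<dots> = real (card (Pth n L)) * real (card (Js L)) * (1 / sqrt L) ^ L"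
      by simp
    also have "\<dots> \<le> real ((2*n+1) * 4^L) * real (4^L) * (1 / sqrt L) ^ L"
    proof -
      have c1: "real (card (Pth n L)) \<le> real ((2*n+1) * 4^L)" using PJ(2) by (simp only: of_nat_le_iff)
      have c2: "real (card (Js L)) \<le> real (4^L::nat)" using PJ(4) by (simp only: of_nat_le_iff)
      show ?thesis by (intro mult_right_mono mult_mono c1 c2) auto
    qed
    also have "\<dots> = (2 * real n + 1) * 4 ^ L * 4 ^ L * (1 / sqrt L) ^ L" by (simp add: algebra_simps)
    also have "\<dots> < 1 / real n powr C" using bnd unfolding L_def .
    finally have "measure M bad < 1 / real n powr C" .
    then show "{\<omega> \<in> space M. \<not> infected T {(a, 0) | a. - int n \<le> a \<and> a \<le> int n} 1 \<omega>
        \<subseteq> {(a, b). - real n - ln (real n) \<le> real_of_int a \<and> real_of_int a \<le> real n + ln (real n)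
                    \<and> 0 \<le> real_of_int b \<and> real_of_int b \<le> ln (real n)}} \<in> sets M
    \<and> measure M {\<omega> \<in> space M. \<not> infected T {(a, 0) | a. - int n \<le> a \<and> a \<le> int n} 1 \<omega>
        \<subseteq> {(a, b). - real n - ln (real n) \<le> real_of_int a \<and> real_of_int a \<le> real n + ln (real n)
                    \<and> 0 \<le> real_of_int b \<and> real_of_int b \<le> ln (real n)}}
      < 1 / real n powr C"
      using badm unfolding bad_def box_def Vn_def by simp
  qed
qed

end
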